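(* Let $G(q,x):=\sum_{j=-\infty}^{-1}q^{j(j+1)/2}x^j$. For $q\in[0,1]$ and $x\in\mathbb{C}$ with $|x|=a>2$, one has $|G(q,x)|\geq (a-2)/(a(a-1))$. In particular, for $|x|=3$, $|G(q,x)|\geq 1/6$.
   Context: Here $q^0$ is interpreted as $1$ (also for $q=0$), so the term $j=-1$ of $G$ equals $1/x$. *)

theory Defs
  imports Complex_Main
begin

text \<open>Substituting j = -(n+1) with n \<ge> 0 gives j(j+1)/2 = n(n+1)/2 and x^j = 1/x^(n+1).
  The nat power convention 0^0 = 1 matches the paper's convention q^0 = 1.\<close>
definition G :: "real \<Rightarrow> complex \<Rightarrow> complex" where
  "G q x = (\<Sum>n. complex_of_real q ^ (n * (n + 1) div 2) / x ^ Suc n)"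

end

theory Submission
  imports Defs
begin

lemma main_bound:
  fixes q :: real and x :: complex and a :: real
  assumes q0: "0 \<le> q" and q1: "q \<le> 1" and xa: "norm x = a" and a2: "a > 2"
  shows "norm (G q x) \<ge> (a - 2) / (a * (a - 1))"
proof -
  define f where "f n = complex_of_real q ^ (n * (n + 1) div 2) / x ^ Suc n" for n
  define r where "r = 1 / a"
  have apos: "a > 0" using a2 by simp
  have r0: "0 \<le> r" and r1: "r < 1" using a2 by (auto simp: r_def)
  have x0: "x \<noteq> 0" using xa apos by auto
  have nf: "norm (f n) \<le> r ^ Suc n" for n
  proof -
    have "norm (complex_of_real q ^ (n * (n + 1) div 2)) \<le> 1"
      using q0 q1 by (simp add: norm_power power_le_one)
    moreover have "norm (x ^ Suc n) = a ^ Suc n" using xa by (simp only: norm_power)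
    ultimately have "norm (f n) \<le> 1 / a ^ Suc n"
      unfolding f_def using apos
      by (simp only: norm_divide) (rule divide_right_mono, auto)
    thus ?thesis by (simp add: r_def power_one_over)
  qed
  have sg: "summable (\<lambda>n. r ^ Suc n)" using r0 r1 by simp
  have sf: "summable f"
    by (rule summable_comparison_test[OF _ sg]) (use nf in auto)
  have G_eq: "G q x = f 0 + (\<Sum>n. f (Suc n))"
    using suminf_split_head[OF sf] unfolding G_def f_def[abs_def] by simp
  have f0: "f 0 = 1 / x" by (simp add: f_def)
  have nf2: "norm (f (Suc n)) \<le> r^2 * r ^ n" for n
    using nf[of "Suc n"] by (simp add: power2_eq_square)
  have sg2: "summable (\<lambda>n. r^2 * r ^ n)" using r0 r1 by simp
  have sn: "summable (\<lambda>n. norm (f (Suc n)))"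
    by (rule summable_comparison_test[OF _ sg2]) (use nf2 in auto)
  have "norm (\<Sum>n. f (Suc n)) \<le> (\<Sum>n. norm (f (Suc n)))"
    using summable_norm[OF sn] by simp
  also have "\<dots> \<le> (\<Sum>n. r^2 * r ^ n)"
    by (rule suminf_le[OF nf2 sn sg2])
  also have "\<dots> = r^2 / (1 - r)"
    using suminf_mult[of "\<lambda>n. r^n" "r^2"] suminf_geometric[of r] r0 r1 by simp
  also have "\<dots> = 1 / (a * (a - 1))"
    using apos a2 by (simp add: r_def field_simps power2_eq_square)
  finally have tail: "norm (\<Sum>n. f (Suc n)) \<le> 1 / (a * (a - 1))" .
  have "norm (f 0) = 1 / a" using f0 xa by (simp add: norm_divide)
  moreover have "norm (G q x) \<ge> norm (f 0) - norm (\<Sum>n. f (Suc n))"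
    unfolding G_eq by (metis norm_diff_ineq)
  ultimately have "norm (G q x) \<ge> 1 / a - 1 / (a * (a - 1))" using tail by linarith
  moreover have "1 / a - 1 / (a * (a - 1)) = (a - 2) / (a * (a - 1))"
    using apos a2 by (simp add: field_simps)
  ultimately show ?thesis by simp
qed

theorem lemma1:
  fixes q :: real
  assumes "0 \<le> q" and "q \<le> 1"
  shows "(\<forall>(x::complex) a. norm x = a \<longrightarrow> a > 2 \<longrightarrow>
            norm (G q x) \<ge> (a - 2) / (a * (a - 1)))
       \<and> (\<forall>x::complex. norm x = 3 \<longrightarrow> norm (G q x) \<ge> 1 / 6)"
proof
  show "\<forall>(x::complex) a. norm x = a \<longrightarrow> a > 2 \<longrightarrow>
            norm (G q x) \<ge> (a - 2) / (a * (a - 1))"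
    using main_bound assms by blast
  show "\<forall>x::complex. norm x = 3 \<longrightarrow> norm (G q x) \<ge> 1 / 6"
  proof (intro allI impI)
    fix x :: complex assume "norm x = 3"
    from main_bound[OF assms this] show "norm (G q x) \<ge> 1 / 6" by simp
  qed
qed

end
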